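(* Let $\mathsf{T}\ge2$ and $\mathsf{M}\ge1$ be integers, and let $\zeta_1(n),\zeta_2(n)$ be strictly positive sequences with $\lim_{n\to\infty}\zeta_1(n)/\zeta_2(n)=\lim_{n\to\infty}\zeta_2(n)=\lim_{n\to\infty}\zeta_2(n)^{\mathsf{T}/(\mathsf{T}-1)}/\zeta_1(n)=0$. For real $A_i,R_i,S_{i,t}$ ($i\in[\mathsf{M}]$, $t\in[\mathsf{T}-1]$) define $$p(x)=\prod_{i=1}^{\mathsf{M}}\Big((A_i+R_i)+\zeta_2(n)\sum_{t=1}^{\mathsf{T}-1}S_{i,t}x^t+\zeta_1(n)R_ix^{\mathsf{T}}\Big)=\sum_{k=0}^{\mathsf{M}\mathsf{T}}c_kx^k,$$ and for $\ell=0,\dots,\mathsf{M}-1$ let $C_\ell=\sum_{\mathcal{S}\subseteq[\mathsf{M}],|\mathcal{S}|=\ell}\big(\prod_{i\in\mathcal{S}}R_i\big)\big(\prod_{l\notin\mathcal{S}}(A_l+R_l)\big)$. Then for each $\ell=0,1,\dots,\mathsf{M}-1$, $$c_{\ell\mathsf{T}}=\zeta_1(n)^\ell C_\ell+o\big(\zeta_1(n)^\ell\big)\quad\text{as }n\to\infty,$$ with $A_i,R_i,S_{i,t}$ held fixed (not depending on $n$).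
   Context: $[\mathsf{M}]=\{1,\dots,\mathsf{M}\}$; empty products equal $1$. The coefficients $c_k$ depend on $n$ through $\zeta_1(n),\zeta_2(n)$. *)

theory Defs
  imports "HOL-Computational_Algebra.Polynomial" "HOL-Library.Landau_Symbols"
begin

definition pfac :: "nat \<Rightarrow> nat \<Rightarrow> (nat \<Rightarrow> real) \<Rightarrow> (nat \<Rightarrow> real) \<Rightarrow> (nat \<Rightarrow> nat \<Rightarrow> real)
    \<Rightarrow> real \<Rightarrow> real \<Rightarrow> real poly" where
  "pfac M T A R S z1 z2 =
     (\<Prod>i\<in>{1..M}. [:A i + R i:]
        + smult z2 (\<Sum>t\<in>{1..T-1}. monom (S i t) t)
        + monom (z1 * R i) T)"

definition Ccoef :: "nat \<Rightarrow> (nat \<Rightarrow> real) \<Rightarrow> (nat \<Rightarrow> real) \<Rightarrow> nat \<Rightarrow> real" where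
  "Ccoef M A R l =
     (\<Sum>S\<in>{S. S \<subseteq> {1..M} \<and> card S = l}.
        (\<Prod>i\<in>S. R i) * (\<Prod>j\<in>{1..M} - S. A j + R j))"

end

theory Submission
  imports Defs
begin

lemma prod_monom1: "finite X \<Longrightarrow> (\<Prod>i\<in>X. monom (r i :: real) 1) = monom (\<Prod>i\<in>X. r i) (card X)"
  by (induction X rule: finite_induct) (auto simp: mult_monom)

lemma prod_const: "finite X \<Longrightarrow> (\<Prod>i\<in>X. [:(a i::real):]) = [:\<Prod>i\<in>X. a i:]"
  by (induction X rule: finite_induct) auto

lemma Ccoef_eq:
  assumes "finite I"
  shows "coeff (\<Prod>i\<in>I. [:a i, r i:]) l =
     (\<Sum>S\<in>{S. S \<subseteq> I \<and> card S = l}. (\<Prod>i\<in>S. r i) * (\<Prod>j\<in>I - S. a j :: real))"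
proof -
  have "(\<Prod>i\<in>I. [:a i, r i:]) = (\<Prod>i\<in>I. monom (r i) 1 + [:a i:])"
    by (intro prod.cong refl) (simp add: monom_Suc monom_0)
  also have "\<dots> = (\<Sum>X\<in>Pow I. (\<Prod>i\<in>X. monom (r i) 1) * (\<Prod>i\<in>I - X. [:a i:]))"
    by (rule prod_add[OF assms])
  also have "\<dots> = (\<Sum>X\<in>Pow I. monom ((\<Prod>i\<in>X. r i) * (\<Prod>i\<in>I - X. a i)) (card X))"
  proof (intro sum.cong refl)
    fix X assume "X \<in> Pow I"
    hence f: "finite X" "finite (I - X)" using assms finite_subset by auto
    show "(\<Prod>i\<in>X. monom (r i) 1) * (\<Prod>i\<in>I - X. [:a i:]) =
          monom ((\<Prod>i\<in>X. r i) * (\<Prod>i\<in>I - X. a i)) (card X)"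
    proof -
      have mc: "monom c n * [:b:] = monom (c * b) n" for c b :: real and n
        by (metis add_0_right monom_0 mult_monom)
      show ?thesis unfolding prod_monom1[OF f(1)] prod_const[OF f(2)] mc ..
    qed
  qed
  finally have "coeff (\<Prod>i\<in>I. [:a i, r i:]) l =
     (\<Sum>X\<in>Pow I. if card X = l then (\<Prod>i\<in>X. r i) * (\<Prod>i\<in>I - X. a i) else 0)"
    by (simp add: coeff_sum)
  also have "\<dots> = (\<Sum>X\<in>{X\<in>Pow I. card X = l}. (\<Prod>i\<in>X. r i) * (\<Prod>i\<in>I - X. a i))"
    using assms by (subst sum.inter_filter[symmetric]) auto
  finally show ?thesis by (simp add: Pow_def)
qed

definition fac :: "nat \<Rightarrow> (nat \<Rightarrow> real) \<Rightarrow> (nat \<Rightarrow> real) \<Rightarrow> (nat \<Rightarrow> nat \<Rightarrow> real) \<Rightarrow> real \<Rightarrow> real \<Rightarrow> nat \<Rightarrow> real poly" where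
  "fac T A R S z1 z2 i = [:A i + R i:] + smult z2 (\<Sum>t\<in>{1..T-1}. monom (S i t) t) + monom (z1 * R i) T"

lemma coeff_fac_mult:
  "coeff (fac T A R S z1 z2 i * p) d = (A i + R i) * coeff p d
     + (\<Sum>t\<in>{1..T-1}. z2 * (if t \<le> d then S i t * coeff p (d - t) else 0))
     + (if T \<le> d then z1 * R i * coeff p (d - T) else 0)"
  by (auto simp add: fac_def distrib_right coeff_sum sum_distrib_left sum_distrib_right coeff_monom_mult
       not_less intro!: sum.cong)

definition mt :: "nat \<Rightarrow> (nat \<Rightarrow> real) \<Rightarrow> (nat \<Rightarrow> real) \<Rightarrow> nat set \<Rightarrow> real \<Rightarrow> nat \<Rightarrow> real" where
  "mt T A R I z d = (if T dvd d then z ^ (d div T) * coeff (\<Prod>i\<in>I. [:A i + R i, R i:]) (d div T) else 0)"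

lemma mt_insert:
  assumes "T \<ge> 1" "finite I" "i \<notin> I"
  shows "mt T A R (insert i I) z d = (A i + R i) * mt T A R I z d
           + (if T \<le> d then z * R i * mt T A R I z (d - T) else 0)"
proof -
  let ?Q = "\<Prod>i\<in>I. [:A i + R i, R i:]"
  have Q: "(\<Prod>i\<in>insert i I. [:A i + R i, R i:]) = smult (A i + R i) ?Q + pCons 0 (smult (R i) ?Q)"
    using assms by simp
  show ?thesis
  proof (cases "T dvd d")
    case True
    then obtain q where d: "d = T * q" by blast
    show ?thesis
    proof (cases q)
      case 0
      then show ?thesis using assms d by (simp add: mt_def Q)
    next
      case (Suc q')
      have "d - T = T * q'" using d Suc by (simp add: algebra_simps)
      then show ?thesis using assms d Suc by (simp add: mt_def Q algebra_simps)
    qed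
  next
    case False
    have "T \<le> d \<Longrightarrow> \<not> T dvd (d - T)" using False assms
      by (metis dvd_diff_nat dvd_refl le_add_diff_inverse2 dvd_add)
    then show ?thesis using False by (simp add: mt_def)
  qed
qed

lemma main_ind:
  fixes u w :: "nat \<Rightarrow> real"
  assumes T: "T \<ge> 1" and upos: "\<And>n. u n > 0"
    and wsm: "\<And>t. 1 \<le> t \<Longrightarrow> t \<le> T-1 \<Longrightarrow> w \<in> o(\<lambda>n. u n powr (real t / real T))"
    and I: "finite I"
  shows "\<forall>d. (\<lambda>n. coeff (\<Prod>i\<in>I. fac T A R S (u n) (w n) i) d - mt T A R I (u n) d)
             \<in> o(\<lambda>n. u n powr (real d / real T))"
  using I
proof (induction I rule: finite_induct)
  case empty
  have "coeff (1::real poly) d - mt T A R {} (u n) d = 0" for d n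
  proof (cases "T dvd d")
    case True
    then obtain q where d: "d = T * q" by blast
    then show ?thesis using T by (cases q) (auto simp: mt_def)
  next
    case False
    then have "d \<noteq> 0" by (metis dvd_0_right)
    then show ?thesis using False by (simp add: mt_def)
  qed
  then show ?case by simp
next
  case (insert i I)
  let ?P = "\<lambda>n. \<Prod>i\<in>I. fac T A R S (u n) (w n) i"
  let ?m = "\<lambda>n d. mt T A R I (u n) d"
  let ?Q = "\<Prod>i\<in>I. [:A i + R i, R i:]"
  let ?g = "\<lambda>d n. u n powr (real d / real T)"
  have mO: "(\<lambda>n. ?m n d) \<in> O(?g d)" for d
  proof (cases "T dvd d")
    case True
    then obtain q where d: "d = T * q" by blast
    have "?m n d = ?g d n * coeff ?Q q" for n
    proof -
      have "real d / real T = real q" using T d by (simp add: field_simps)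
      then show ?thesis using T d upos[of n] by (simp add: mt_def powr_realpow)
    qed
    then have "eventually (\<lambda>n. norm (?m n d) \<le> \<bar>coeff ?Q q\<bar> * norm (?g d n)) sequentially"
      by (simp add: abs_mult)
    then show ?thesis by (rule bigoI)
  next
    case False
    then show ?thesis by (simp add: mt_def)
  qed
  have cO: "(\<lambda>n. coeff (?P n) d) \<in> O(?g d)" for d
  proof -
    have "(\<lambda>n. (coeff (?P n) d - ?m n d) + ?m n d) \<in> O(?g d)"
      using insert.IH landau_o.small_imp_big mO by (intro sum_in_bigo(1)) blast+
    then show ?thesis by simp
  qed
  show ?case
  proof
    fix d
    have eq: "coeff (\<Prod>i\<in>insert i I. fac T A R S (u n) (w n) i) d - mt T A R (insert i I) (u n) d
       = (A i + R i) * (coeff (?P n) d - ?m n d)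
         + (\<Sum>t\<in>{1..T-1}. w n * (if t \<le> d then S i t * coeff (?P n) (d - t) else 0))
         + (if T \<le> d then u n * R i * (coeff (?P n) (d - T) - ?m n (d - T)) else 0)" for n
      using insert.hyps T by (simp add: coeff_fac_mult mt_insert algebra_simps)
    have t1: "(\<lambda>n. (A i + R i) * (coeff (?P n) d - ?m n d)) \<in> o(?g d)"
    proof (cases "A i + R i = 0")
      case False
      then show ?thesis using insert.IH by simp
    qed simp
    have t2: "(\<lambda>n. \<Sum>t\<in>{1..T-1}. w n * (if t \<le> d then S i t * coeff (?P n) (d - t) else 0)) \<in> o(?g d)"
    proof (rule big_sum_in_smallo)
      fix t assume t: "t \<in> {1..T-1}"
      show "(\<lambda>n. w n * (if t \<le> d then S i t * coeff (?P n) (d - t) else 0)) \<in> o(?g d)"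
      proof (cases "t \<le> d")
        case True
        have "(\<lambda>n. w n * (S i t * coeff (?P n) (d - t))) \<in> o(\<lambda>n. ?g t n * ?g (d - t) n)"
          using t cO[of "d - t"] by (intro landau_o.small_big_mult wsm) auto
        also have "(\<lambda>n. ?g t n * ?g (d - t) n) = ?g d"
        proof
          fix n
          have "real t / real T + real (d - t) / real T = real d / real T"
            using True by (simp add: of_nat_diff add_divide_distrib[symmetric])
          then show "?g t n * ?g (d - t) n = ?g d n"
            by (simp add: powr_add[symmetric])
        qed
        finally show ?thesis using True by simp
      qed simp
    qed
    have t3: "(\<lambda>n. if T \<le> d then u n * R i * (coeff (?P n) (d - T) - ?m n (d - T)) else 0) \<in> o(?g d)"
    proof (cases "T \<le> d")
      case True
      have uO: "(\<lambda>n. u n * R i) \<in> O(u)"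
        by (rule bigoI[where c = "\<bar>R i\<bar>"]) (simp add: abs_mult)
      have "(\<lambda>n. u n * R i * (coeff (?P n) (d - T) - ?m n (d - T))) \<in> o(\<lambda>n. u n * ?g (d - T) n)"
        using insert.IH by (intro landau_o.big_small_mult uO) blast
      also have "(\<lambda>n. u n * ?g (d - T) n) = ?g d"
      proof
        fix n
        have "1 + real (d - T) / real T = real d / real T"
          using True T by (simp add: of_nat_diff field_simps)
        then show "u n * ?g (d - T) n = ?g d n"
          using upos[of n] by (metis powr_add powr_one order.strict_iff_not)
      qed
      finally show ?thesis using True by simp
    qed simp
    have "(\<lambda>n. (A i + R i) * (coeff (?P n) d - ?m n d)
         + (\<Sum>t\<in>{1..T-1}. w n * (if t \<le> d then S i t * coeff (?P n) (d - t) else 0))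
         + (if T \<le> d then u n * R i * (coeff (?P n) (d - T) - ?m n (d - T)) else 0)) \<in> o(?g d)"
      by (intro sum_in_smallo(1) t1 t2 t3)
    then show "(\<lambda>n. coeff (\<Prod>i\<in>insert i I. fac T A R S (u n) (w n) i) d - mt T A R (insert i I) (u n) d) \<in> o(?g d)"
      by (simp only: eq)
  qed
qed

theorem lemma8:
  fixes T M :: nat and \<zeta>1 \<zeta>2 :: "nat \<Rightarrow> real"
    and A R :: "nat \<Rightarrow> real" and S :: "nat \<Rightarrow> nat \<Rightarrow> real" and l :: nat
  assumes "T \<ge> 2" and "M \<ge> 1"
    and "\<And>n. \<zeta>1 n > 0" and "\<And>n. \<zeta>2 n > 0"
    and "(\<lambda>n. \<zeta>1 n / \<zeta>2 n) \<longlonglongrightarrow> 0"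
    and "\<zeta>2 \<longlonglongrightarrow> 0"
    and "(\<lambda>n. \<zeta>2 n powr (real T / (real T - 1)) / \<zeta>1 n) \<longlonglongrightarrow> 0"
    and "l \<le> M - 1"
  shows "(\<lambda>n. coeff (pfac M T A R S (\<zeta>1 n) (\<zeta>2 n)) (l * T) - \<zeta>1 n ^ l * Ccoef M A R l)
           \<in> o[sequentially](\<lambda>n. \<zeta>1 n ^ l)"
proof -
  note T = assms(1) and upos = assms(3) and wpos = assms(4)
  define e where "e = (real T - 1) / real T"
  have e: "e > 0" using T by (simp add: e_def)
  have "((\<lambda>n. (\<zeta>2 n powr (real T / (real T - 1)) / \<zeta>1 n) powr e) \<longlongrightarrow> 0) sequentially"
    by (rule tendsto_zero_powrI[OF assms(7) tendsto_const _ e]) (simp add: less_imp_le[OF upos])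
  moreover have "(\<zeta>2 n powr (real T / (real T - 1)) / \<zeta>1 n) powr e = \<zeta>2 n / \<zeta>1 n powr e" for n
  proof -
    have h1: "real T / (real T - 1) * e = 1" using T by (simp add: e_def)
    have "(\<zeta>2 n powr (real T / (real T - 1)) / \<zeta>1 n) powr e
        = (\<zeta>2 n powr (real T / (real T - 1))) powr e / \<zeta>1 n powr e"
      using upos[of n] wpos[of n] by (simp add: powr_divide)
    also have "\<dots> = \<zeta>2 n / \<zeta>1 n powr e"
      unfolding powr_powr h1 using wpos[of n] by simp
    finally show ?thesis .
  qed
  ultimately have "((\<lambda>n. \<zeta>2 n / \<zeta>1 n powr e) \<longlongrightarrow> 0) sequentially" by simp
  then have wo: "\<zeta>2 \<in> o(\<lambda>n. \<zeta>1 n powr e)"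
    by (rule smalloI_tendsto) (simp add: less_imp_neq[OF upos, symmetric])
  have "((\<lambda>n. (\<zeta>1 n / \<zeta>2 n) * \<zeta>2 n) \<longlongrightarrow> 0 * 0) sequentially"
    by (intro tendsto_mult assms(5) assms(6))
  moreover have "(\<lambda>n. (\<zeta>1 n / \<zeta>2 n) * \<zeta>2 n) = \<zeta>1" using wpos by (auto simp: less_imp_neq[symmetric])
  ultimately have "\<zeta>1 \<longlonglongrightarrow> 0" by simp
  then have ev1: "eventually (\<lambda>n. \<zeta>1 n < 1) sequentially"
    by (rule order_tendstoD(2)) simp
  have wsm: "\<zeta>2 \<in> o(\<lambda>n. \<zeta>1 n powr (real t / real T))" if t: "1 \<le> t" "t \<le> T - 1" for t
  proof -
    have "(\<lambda>n. \<zeta>1 n powr e) \<in> O(\<lambda>n. \<zeta>1 n powr (real t / real T))"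
    proof (rule bigoI[where c = 1])
      have le: "real t / real T \<le> e" using t T by (simp add: e_def divide_right_mono of_nat_diff)
      show "eventually (\<lambda>n. norm (\<zeta>1 n powr e) \<le> 1 * norm (\<zeta>1 n powr (real t / real T))) sequentially"
        using ev1 by eventually_elim (use le in \<open>simp add: powr_mono' less_imp_le[OF upos]\<close>)
    qed
    with wo show ?thesis by (rule landau_o.small_big_trans)
  qed
  have main: "\<forall>d. (\<lambda>n. coeff (\<Prod>i\<in>{1..M}. fac T A R S (\<zeta>1 n) (\<zeta>2 n) i) d - mt T A R {1..M} (\<zeta>1 n) d)
             \<in> o(\<lambda>n. \<zeta>1 n powr (real d / real T))"
    using T by (intro main_ind upos wsm) auto
  have pf: "pfac M T A R S z1 z2 = (\<Prod>i\<in>{1..M}. fac T A R S z1 z2 i)" for z1 z2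
    by (simp add: pfac_def fac_def)
  have mtl: "mt T A R {1..M} z (l * T) = z ^ l * Ccoef M A R l" for z
    using T by (simp add: mt_def Ccoef_def Ccoef_eq)
  have pw: "\<zeta>1 n powr (real (l * T) / real T) = \<zeta>1 n ^ l" for n
    using T upos[of n] by (simp add: powr_realpow)
  show ?thesis using main[rule_format, of "l * T"] by (simp only: pf mtl pw)
qed

end
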